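(* Let $u$ and $v$ be two prime words such that $u<_{lex}v$. Then $v=u^\alpha xy$ for some ordinal $\alpha$ and words $x,y$ such that $|x|\le|u|$ and $u<_{str}x$.
   Context: $A$ is a finite alphabet with a linear order $<_A$. Words are sequences of letters indexed by countable ordinals, $|x|$ is the length, $x^\alpha$ the concatenation of $\alpha$ copies of $x$. A suffix of $x$ is $x[\gamma,|x|)$, proper if $0<\gamma<|x|$. Write $x<_{str}x'$ if there are letters $a<_Ab$ and words $y,z,z'$ with $x=yaz$, $x'=ybz'$; $x\le_{lex}x'$ iff $x$ is a prefix of $x'$ or $x<_{str}x'$; $<_{lex}$ is its strict version. A word is primitive if $x=y^\alpha$ implies $\alpha=1$ and $y=x$; $w$ is prime if it is primitive and every proper suffix $z$ satisfies $w\le_{lex}z$. *)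

theory Defs
  imports Main
begin

text \<open>A word is a labelled
well-order: a well-order on a set of natural numbers (every countable ordinal is
the order type of such a well-order) together with a labelling of its field by
letters.  Two words are equal iff they are isomorphic as labelled well-orders.\<close>

type_synonym 'a word = "nat rel \<times> (nat \<Rightarrow> 'a)"

definition wf_word :: "'a word \<Rightarrow> bool" where
  "wf_word w \<longleftrightarrow> Well_order (fst w)"

definition wdom :: "'a word \<Rightarrow> nat set" where
  "wdom w = Field (fst w)"

definition word_iso :: "'a word \<Rightarrow> 'a word \<Rightarrow> (nat \<Rightarrow> nat) \<Rightarrow> bool" where
  "word_iso w w' f \<longleftrightarrow> bij_betw f (wdom w) (wdom w') \<and>
     (\<forall>i\<in>wdom w. \<forall>j\<in>wdom w. (i, j) \<in> fst w \<longleftrightarrow> (f i, f j) \<in> fst w') \<and>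
     (\<forall>i\<in>wdom w. snd w' (f i) = snd w i)"

definition word_eq :: "'a word \<Rightarrow> 'a word \<Rightarrow> bool" where
  "word_eq w w' \<longleftrightarrow> (\<exists>f. word_iso w w' f)"

definition subword :: "'a word \<Rightarrow> nat set \<Rightarrow> 'a word" where
  "subword w P = (Restr (fst w) P, snd w)"

definition letter :: "'a \<Rightarrow> 'a word" where
  "letter a = ({(0, 0)}, \<lambda>_. a)"

definition is_concat :: "'a word \<Rightarrow> 'a word \<Rightarrow> 'a word \<Rightarrow> bool" where
  "is_concat z x y \<longleftrightarrow> (\<exists>P \<subseteq> wdom z.
      (\<forall>i\<in>P. \<forall>j\<in>wdom z. (j, i) \<in> fst z \<longrightarrow> j \<in> P) \<and>
      word_eq (subword z P) x \<and> word_eq (subword z (wdom z - P)) y)"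

definition is_pow :: "'a word \<Rightarrow> 'a word \<Rightarrow> nat rel \<Rightarrow> bool" where
  "is_pow z u \<alpha> \<longleftrightarrow> (\<exists>f. bij_betw f (wdom z) (Field \<alpha> \<times> wdom u) \<and>
     (\<forall>i\<in>wdom z. \<forall>j\<in>wdom z. (i, j) \<in> fst z \<longleftrightarrow>
        ((fst (f i) \<noteq> fst (f j) \<and> (fst (f i), fst (f j)) \<in> \<alpha>) \<or>
         (fst (f i) = fst (f j) \<and> (snd (f i), snd (f j)) \<in> fst u))) \<and>
     (\<forall>i\<in>wdom z. snd z i = snd u (snd (f i))))"

definition str_less :: "'a::linorder word \<Rightarrow> 'a word \<Rightarrow> bool" where
  "str_less x x' \<longleftrightarrow> (\<exists>y z z' t t' a b. a < b \<and>
      wf_word y \<and> wf_word z \<and> wf_word z' \<and> wf_word t \<and> wf_word t' \<and>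
      is_concat x y t \<and> is_concat t (letter a) z \<and>
      is_concat x' y t' \<and> is_concat t' (letter b) z')"

definition is_prefix :: "'a word \<Rightarrow> 'a word \<Rightarrow> bool" where
  "is_prefix x x' \<longleftrightarrow> (\<exists>z. wf_word z \<and> is_concat x' x z)"

definition lex_le :: "'a::linorder word \<Rightarrow> 'a word \<Rightarrow> bool" where
  "lex_le x x' \<longleftrightarrow> is_prefix x x' \<or> str_less x x'"

definition lex_less :: "'a::linorder word \<Rightarrow> 'a word \<Rightarrow> bool" where
  "lex_less x x' \<longleftrightarrow> lex_le x x' \<and> \<not> word_eq x x'"

definition proper_suffix :: "'a word \<Rightarrow> 'a word \<Rightarrow> bool" where
  "proper_suffix z x \<longleftrightarrow> (\<exists>\<gamma>\<in>wdom x. (\<exists>j\<in>wdom x. j \<noteq> \<gamma> \<and> (j, \<gamma>) \<in> fst x) \<and>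
      word_eq z (subword x {i \<in> wdom x. (\<gamma>, i) \<in> fst x}))"

definition primitive :: "'a word \<Rightarrow> bool" where
  "primitive x \<longleftrightarrow> (\<forall>y \<alpha>. wf_word y \<and> Well_order \<alpha> \<and> is_pow x y \<alpha> \<longrightarrow>
      (\<exists>k. Field \<alpha> = {k}) \<and> word_eq y x)"

definition prime_word :: "'a::linorder word \<Rightarrow> bool" where
  "prime_word w \<longleftrightarrow> primitive w \<and>
     (\<forall>z. wf_word z \<and> proper_suffix z w \<longrightarrow> lex_le w z)"

end

theory Submission
  imports Defs
begin


section \<open>Basic well-order facts\<close>

lemma wo_refl: "Well_order r \<Longrightarrow> a \<in> Field r \<Longrightarrow> (a,a) \<in> r"
  by (simp add: well_order_on_def linear_order_on_def partial_order_on_def preorder_on_def refl_on_def)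

lemma wo_antisym: "Well_order r \<Longrightarrow> (a,b) \<in> r \<Longrightarrow> (b,a) \<in> r \<Longrightarrow> a = b"
  by (simp add: well_order_on_def linear_order_on_def partial_order_on_def antisym_def)

lemma wo_trans: "Well_order r \<Longrightarrow> (a,b) \<in> r \<Longrightarrow> (b,c) \<in> r \<Longrightarrow> (a,c) \<in> r"
  unfolding well_order_on_def linear_order_on_def partial_order_on_def preorder_on_def trans_def
  by blast

lemma wo_total: "Well_order r \<Longrightarrow> a \<in> Field r \<Longrightarrow> b \<in> Field r \<Longrightarrow> (a,b) \<in> r \<or> (b,a) \<in> r"
  using wo_refl[of r a]
  unfolding well_order_on_def linear_order_on_def total_on_def by metis

lemma wo_wf: "Well_order r \<Longrightarrow> wf (r - Id)"
  by (simp add: well_order_on_def)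

lemma Field_Restr_sub: "Well_order r \<Longrightarrow> A \<subseteq> Field r \<Longrightarrow> Field (Restr r A) = A"
  by (simp add: Refl_Field_Restr2 well_order_on_def linear_order_on_def partial_order_on_def preorder_on_def)

lemma wf_word_subword: "wf_word w \<Longrightarrow> wf_word (subword w P)"
  by (simp add: wf_word_def subword_def Well_order_Restr)

lemma word_eq_refl: "word_eq w w"
  unfolding word_eq_def word_iso_def by (rule exI[of _ id]) auto

definition dcl :: "nat rel \<Rightarrow> nat set \<Rightarrow> bool" where
  "dcl r A \<longleftrightarrow> A \<subseteq> Field r \<and> (\<forall>a\<in>A. \<forall>b. (b,a) \<in> r \<longrightarrow> b \<in> A)"

definition oemb :: "nat rel \<Rightarrow> nat rel \<Rightarrow> nat set \<Rightarrow> (nat \<Rightarrow> nat) \<Rightarrow> bool" where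
  "oemb r s A f \<longleftrightarrow> A \<subseteq> Field r \<and> (\<forall>a\<in>A. \<forall>b\<in>A. (a,b) \<in> r \<longleftrightarrow> (f a, f b) \<in> s)"

definition pre_c :: "'a word \<Rightarrow> 'a word \<Rightarrow> bool" where
  "pre_c x y \<longleftrightarrow> (\<exists>f. oemb (fst x) (fst y) (Field (fst x)) f \<and> dcl (fst y) (f ` Field (fst x)) \<and>
      (\<forall>k\<in>Field (fst x). snd y (f k) = snd x k))"

definition str_c :: "'a::linorder word \<Rightarrow> 'a word \<Rightarrow> bool" where
  "str_c x y \<longleftrightarrow> (\<exists>i f. i \<in> Field (fst x) \<and> oemb (fst x) (fst y) (under (fst x) i) f \<and>
      dcl (fst y) (f ` under (fst x) i) \<and>
      (\<forall>k\<in>underS (fst x) i. snd y (f k) = snd x k) \<and> snd x i < snd y (f i))"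

definition lexle_c :: "'a::linorder word \<Rightarrow> 'a word \<Rightarrow> bool" where
  "lexle_c x y \<longleftrightarrow> pre_c x y \<or> str_c x y"

lemma oemb_Field: "Well_order r \<Longrightarrow> oemb r s A f \<Longrightarrow> a \<in> A \<Longrightarrow> f a \<in> Field s"
  unfolding oemb_def by (meson FieldI1 subsetD wo_refl)

lemma oemb_inj: "Well_order r \<Longrightarrow> oemb r s A f \<Longrightarrow> inj_on f A"
  unfolding inj_on_def oemb_def by (metis subsetD wo_antisym wo_refl)

lemma oemb_sub: "B \<subseteq> A \<Longrightarrow> oemb r s A f \<Longrightarrow> oemb r s B f"
  unfolding oemb_def by blast

lemma oemb_comp: "oemb r s A f \<Longrightarrow> f ` A \<subseteq> B \<Longrightarrow> oemb s t B g \<Longrightarrow> oemb r t A (g \<circ> f)"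
  unfolding oemb_def by (simp add: image_subset_iff)

lemma oemb_inv: "Well_order r \<Longrightarrow> Well_order s \<Longrightarrow> oemb r s A f \<Longrightarrow> oemb s r (f ` A) (inv_into A f)"
proof -
  assume r: "Well_order r" and s: "Well_order s" and e: "oemb r s A f"
  have inj: "inj_on f A" using oemb_inj[OF r e] .
  show ?thesis unfolding oemb_def
  proof (intro conjI ballI)
    show "f ` A \<subseteq> Field s" using oemb_Field[OF r e] by blast
  next
    fix a b assume a: "a \<in> f ` A" and b: "b \<in> f ` A"
    then obtain a' b' where "a' \<in> A" "b' \<in> A" "a = f a'" "b = f b'" by blast
    then show "(a, b) \<in> s \<longleftrightarrow> (inv_into A f a, inv_into A f b) \<in> r"
      using e inj unfolding oemb_def by auto
  qed
qed

lemma dcl_under: "Well_order r \<Longrightarrow> i \<in> Field r \<Longrightarrow> dcl r (under r i)"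
  unfolding dcl_def under_def by (auto intro: wo_trans FieldI1)

lemma dcl_image:
  assumes r: "Well_order r" and e: "oemb r s A f" and d: "dcl s (f ` A)"
    and B: "dcl r B" "B \<subseteq> A"
  shows "dcl s (f ` B)"
  unfolding dcl_def
proof (intro conjI ballI allI impI)
  show "f ` B \<subseteq> Field s" using d B unfolding dcl_def by blast
next
  fix a c assume a: "a \<in> f ` B" and c: "(c, a) \<in> s"
  then obtain b where b: "b \<in> B" "a = f b" by blast
  have "c \<in> f ` A" using d c b B unfolding dcl_def by blast
  then obtain c' where c': "c' \<in> A" "c = f c'" by blast
  have "(c', b) \<in> r" using e c' b B c unfolding oemb_def by blast
  then have "c' \<in> B" using B b unfolding dcl_def by blast
  then show "c \<in> f ` B" using c' by blast
qed

lemma under_image: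
  assumes r: "Well_order r" and e: "oemb r s A f" and d: "dcl s (f ` A)"
    and A: "dcl r A" and i: "i \<in> A"
  shows "f ` under r i = under s (f i)"
proof
  show "f ` under r i \<subseteq> under s (f i)"
  proof
    fix y assume "y \<in> f ` under r i"
    then obtain k where k: "(k,i) \<in> r" "y = f k" unfolding under_def by blast
    have "k \<in> A" using A k i unfolding dcl_def by blast
    then show "y \<in> under s (f i)" using e i k unfolding oemb_def under_def by blast
  qed
next
  show "under s (f i) \<subseteq> f ` under r i"
  proof
    fix y assume y: "y \<in> under s (f i)"
    then have "y \<in> f ` A" using d i unfolding dcl_def under_def by blast
    then obtain k where k: "k \<in> A" "y = f k" by blast
    then have "(k, i) \<in> r" using e i y unfolding oemb_def under_def by blast
    then show "y \<in> f ` under r i" using k unfolding under_def by blast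
  qed
qed

lemma underS_image:
  assumes r: "Well_order r" and e: "oemb r s A f" and d: "dcl s (f ` A)"
    and A: "dcl r A" and i: "i \<in> A"
  shows "f ` underS r i = underS s (f i)"
proof -
  have inj: "inj_on f A" using oemb_inj[OF r e] .
  have sub: "under r i \<subseteq> A" using A i unfolding dcl_def under_def by blast
  have "underS r i = under r i - {i}" unfolding under_def underS_def by blast
  moreover have "underS s (f i) = under s (f i) - {f i}" unfolding under_def underS_def by blast
  moreover have "f ` (under r i - {i}) = f ` under r i - {f i}"
    using inj_on_image_set_diff[OF inj, of "under r i" "{i}"] sub i by auto
  ultimately show ?thesis using under_image[OF assms] by simp
qed



lemma under_sub_Field: "under r i \<subseteq> Field r"
  unfolding under_def by (auto intro: FieldI1)

lemma i_in_under: "Well_order r \<Longrightarrow> i \<in> Field r \<Longrightarrow> i \<in> under r i"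
  unfolding under_def by (simp add: wo_refl)

lemma dcl_Field: "dcl r (Field r)"
  unfolding dcl_def by (auto intro: FieldI1)

lemma lexle_trans:
  fixes x y z :: "'a::linorder word"
  assumes wx: "Well_order (fst x)" and wy: "Well_order (fst y)" and wz: "Well_order (fst z)"
    and xy: "lexle_c x y" and yz: "lexle_c y z"
  shows "lexle_c x z"
proof -
  obtain r lx where x: "x = (r, lx)" by (cases x)
  obtain s ly where y: "y = (s, ly)" by (cases y)
  obtain t lz where z: "z = (t, lz)" by (cases z)
  have r: "Well_order r" and s: "Well_order s" and t: "Well_order t" using wx wy wz x y z by auto
  note defs = lexle_c_def pre_c_def str_c_def
  have xy': "pre_c (r,lx) (s,ly) \<or> str_c (r,lx) (s,ly)" using xy x y by (simp add: lexle_c_def)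
  have yz': "pre_c (s,ly) (t,lz) \<or> str_c (s,ly) (t,lz)" using yz y z by (simp add: lexle_c_def)
  have "pre_c (r,lx) (t,lz) \<or> str_c (r,lx) (t,lz)"
  proof (cases "pre_c (r,lx) (s,ly)")
    case True
    then obtain f where f1: "oemb r s (Field r) f" and f2: "dcl s (f ` Field r)"
      and f3: "\<forall>k\<in>Field r. ly (f k) = lx k" unfolding pre_c_def by auto
    have fF: "f ` Field r \<subseteq> Field s" using f2 unfolding dcl_def by blast
    show ?thesis
    proof (cases "pre_c (s,ly) (t,lz)")
      case True
      then obtain g where g1: "oemb s t (Field s) g" and g2: "dcl t (g ` Field s)"
        and g3: "\<forall>k\<in>Field s. lz (g k) = ly k" unfolding pre_c_def by auto
      have "oemb r t (Field r) (g \<circ> f)" using oemb_comp[OF f1 fF g1] .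
      moreover have "dcl t ((g \<circ> f) ` Field r)"
        using dcl_image[OF s g1 g2 f2 fF] by (simp add: image_comp)
      moreover have "\<forall>k\<in>Field r. lz ((g \<circ> f) k) = lx k" using f3 g3 fF by auto
      ultimately show ?thesis unfolding pre_c_def fst_conv snd_conv by blast
    next
      case False
      then have "str_c (s,ly) (t,lz)" using yz' by simp
      then obtain j g where j: "j \<in> Field s" and g1: "oemb s t (under s j) g"
        and g2: "dcl t (g ` under s j)" and g3: "\<forall>k\<in>underS s j. lz (g k) = ly k"
        and g4: "ly j < lz (g j)" unfolding str_c_def by auto
      show ?thesis
      proof (cases "j \<in> f ` Field r")
        case True
        then obtain i where i: "i \<in> Field r" "j = f i" by blast
        have im: "f ` under r i = under s j"
          using under_image[OF r f1 f2 dcl_Field i(1)] i by simp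
        have imS: "f ` underS r i = underS s j"
          using underS_image[OF r f1 f2 dcl_Field i(1)] i by simp
        have e: "oemb r t (under r i) (g \<circ> f)"
          using oemb_comp[OF oemb_sub[OF under_sub_Field f1] _ g1] im by simp
        have d: "dcl t ((g \<circ> f) ` under r i)" using g2 im by (metis image_comp)
        have l: "\<forall>k\<in>underS r i. lz ((g \<circ> f) k) = lx k"
        proof
          fix k assume k: "k \<in> underS r i"
          then have "f k \<in> underS s j" using imS by blast
          then show "lz ((g \<circ> f) k) = lx k" using g3 f3 k by (auto simp: underS_def intro: FieldI1)
        qed
        have "lx i < lz ((g \<circ> f) i)" using g4 f3 i by simp
        then have "str_c (r,lx) (t,lz)" unfolding str_c_def fst_conv snd_conv using i(1) e d l by blast
        then show ?thesis by simp
      next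
        case False
        have sub: "f ` Field r \<subseteq> underS s j"
        proof
          fix b assume b: "b \<in> f ` Field r"
          then have bF: "b \<in> Field s" using fF by blast
          have "(j, b) \<notin> s" using False b f2 unfolding dcl_def by blast
          then have "(b, j) \<in> s" using wo_total[OF s bF j] by blast
          moreover have "b \<noteq> j" using False b by blast
          ultimately show "b \<in> underS s j" unfolding underS_def by blast
        qed
        have sub2: "f ` Field r \<subseteq> under s j" using sub unfolding underS_def under_def by blast
        have e: "oemb r t (Field r) (g \<circ> f)" using oemb_comp[OF f1 sub2 g1] .
        have d: "dcl t ((g \<circ> f) ` Field r)"
          using dcl_image[OF s g1 g2 f2 sub2] by (simp add: image_comp)
        have "\<forall>k\<in>Field r. lz ((g \<circ> f) k) = lx k" using f3 g3 sub by auto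
        then have "pre_c (r,lx) (t,lz)" unfolding pre_c_def fst_conv snd_conv using e d by blast
        then show ?thesis by simp
      qed
    qed
  next
    case False
    then have "str_c (r,lx) (s,ly)" using xy' by simp
    then obtain i f where i: "i \<in> Field r" and f1: "oemb r s (under r i) f"
      and f2: "dcl s (f ` under r i)" and f3: "\<forall>k\<in>underS r i. ly (f k) = lx k"
      and f4: "lx i < ly (f i)" unfolding str_c_def by auto
    have fF: "f ` under r i \<subseteq> Field s" using f2 unfolding dcl_def by blast
    have iu: "i \<in> under r i" using i_in_under[OF r i] .
    have du: "dcl r (under r i)" using dcl_under[OF r i] .
    show ?thesis
    proof (cases "pre_c (s,ly) (t,lz)")
      case True
      then obtain g where g1: "oemb s t (Field s) g" and g2: "dcl t (g ` Field s)"
        and g3: "\<forall>k\<in>Field s. lz (g k) = ly k" unfolding pre_c_def by auto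
      have e: "oemb r t (under r i) (g \<circ> f)" using oemb_comp[OF f1 fF g1] .
      have d: "dcl t ((g \<circ> f) ` under r i)"
        using dcl_image[OF s g1 g2 f2 fF] by (simp add: image_comp)
      have l: "\<forall>k\<in>underS r i. lz ((g \<circ> f) k) = lx k" using f3 g3 fF
        by (auto simp: underS_def under_def)
      have "lx i < lz ((g \<circ> f) i)" using f4 g3 fF iu by auto
      then have "str_c (r,lx) (t,lz)" unfolding str_c_def fst_conv snd_conv using i e d l by blast
      then show ?thesis by simp
    next
      case False
      then have "str_c (s,ly) (t,lz)" using yz' by simp
      then obtain j g where j: "j \<in> Field s" and g1: "oemb s t (under s j) g"
        and g2: "dcl t (g ` under s j)" and g3: "\<forall>k\<in>underS s j. lz (g k) = ly k"
        and g4: "ly j < lz (g j)" unfolding str_c_def by auto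
      have imi: "f ` under r i = under s (f i)" using under_image[OF r f1 f2 du iu] .
      have imSi: "f ` underS r i = underS s (f i)" using underS_image[OF r f1 f2 du iu] .
      have fi: "f i \<in> Field s" using fF iu by blast
      show ?thesis
      proof (cases "(f i, j) \<in> s")
        case True
        have sub: "under s (f i) \<subseteq> under s j" using True unfolding under_def by (auto intro: wo_trans[OF s])
        have sub1: "f ` under r i \<subseteq> under s j" using sub imi by simp
        have e: "oemb r t (under r i) (g \<circ> f)" using oemb_comp[OF f1 sub1 g1] .
        have dd: "dcl s (under s (f i))" using dcl_under[OF s fi] .
        have d: "dcl t ((g \<circ> f) ` under r i)"
          using dcl_image[OF s g1 g2 dd sub] imi by (metis image_comp)
        have l: "\<forall>k\<in>underS r i. lz ((g \<circ> f) k) = lx k"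
        proof
          fix k assume k: "k \<in> underS r i"
          then have fk: "f k \<in> underS s (f i)" using imSi by blast
          have "f k \<in> underS s j"
          proof -
            have "(f k, j) \<in> s" using fk True unfolding underS_def by (auto intro: wo_trans[OF s])
            moreover have "f k \<noteq> j"
            proof
              assume "f k = j"
              then have "(j, f i) \<in> s" "j \<noteq> f i" using fk unfolding underS_def by auto
              then show False using True wo_antisym[OF s] by blast
            qed
            ultimately show ?thesis unfolding underS_def by blast
          qed
          then show "lz ((g \<circ> f) k) = lx k" using g3 f3 k by auto
        qed
        have "lx i < lz ((g \<circ> f) i)"
        proof (cases "f i = j")
          case True
          then show ?thesis using f4 g4 by auto
        next
          case False
          then have "f i \<in> underS s j" using \<open>(f i, j) \<in> s\<close> unfolding underS_def by blast
          then show ?thesis using f4 g3 by auto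
        qed
        then have "str_c (r,lx) (t,lz)" unfolding str_c_def fst_conv snd_conv using i e d l by blast
        then show ?thesis by simp
      next
        case False
        then have ji: "(j, f i) \<in> s" "j \<noteq> f i" using wo_total[OF s fi j] wo_refl[OF s fi] by auto
        then have "j \<in> f ` under r i" using imi unfolding under_def by blast
        then obtain k0 where k0: "k0 \<in> under r i" "j = f k0" by blast
        have k0i: "k0 \<noteq> i" using k0 ji by blast
        have k0F: "k0 \<in> Field r" using k0 under_sub_Field[of r i] by blast
        have subk: "under r k0 \<subseteq> under r i" using k0 unfolding under_def by (auto intro: wo_trans[OF r])
        have imk: "f ` under r k0 = under s j"
          using under_image[OF r f1 f2 du k0(1)] k0 by simp
        have e: "oemb r t (under r k0) (g \<circ> f)"
          using oemb_comp[OF oemb_sub[OF subk f1] _ g1] imk by simp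
        have d: "dcl t ((g \<circ> f) ` under r k0)" using g2 imk by (metis image_comp)
        have imSk: "f ` underS r k0 = underS s j"
          using underS_image[OF r f1 f2 du k0(1)] k0 by simp
        have l: "\<forall>m\<in>underS r k0. lz ((g \<circ> f) m) = lx m"
        proof
          fix m assume m: "m \<in> underS r k0"
          have "m \<in> underS r i"
          proof -
            have "(m, i) \<in> r" using m k0 unfolding underS_def under_def by (auto intro: wo_trans[OF r])
            moreover have "m \<noteq> i"
            proof
              assume "m = i"
              then have "(i, k0) \<in> r" using m unfolding underS_def by auto
              then show False using k0 k0i wo_antisym[OF r] unfolding under_def by blast
            qed
            ultimately show ?thesis unfolding underS_def by blast
          qed
          moreover have "f m \<in> underS s j" using imSk m by blast
          ultimately show "lz ((g \<circ> f) m) = lx m" using g3 f3 by auto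
        qed
        have "k0 \<in> underS r i" using k0 k0i unfolding under_def underS_def by blast
        then have "lx k0 < lz ((g \<circ> f) k0)" using f3 g4 k0 by auto
        then have "str_c (r,lx) (t,lz)" unfolding str_c_def fst_conv snd_conv using k0F e d l by blast
        then show ?thesis by simp
      qed
    qed
  qed
  then show ?thesis using x z by (simp add: lexle_c_def)
qed



lemma wdom_subword: "Well_order (fst w) \<Longrightarrow> P \<subseteq> wdom w \<Longrightarrow> wdom (subword w P) = P"
  unfolding wdom_def subword_def by (simp add: Field_Restr_sub)

lemma wiso_sub:
  assumes s: "Well_order (fst w)" and P: "P \<subseteq> wdom w"
  shows "word_iso (subword w P) x g \<longleftrightarrow> bij_betw g P (wdom x) \<and>
     (\<forall>i\<in>P. \<forall>j\<in>P. (i,j) \<in> fst w \<longleftrightarrow> (g i, g j) \<in> fst x) \<and> (\<forall>i\<in>P. snd x (g i) = snd w i)"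
  using wdom_subword[OF s P] unfolding word_iso_def by (auto simp: subword_def)

lemma underS_dcl: "Well_order r \<Longrightarrow> dcl r (underS r i)"
  unfolding dcl_def underS_def
  by (auto intro: FieldI1 wo_trans dest: wo_antisym)

lemma underS_min: "Well_order r \<Longrightarrow> i \<in> Field r \<Longrightarrow>
    i \<in> Field r - underS r i \<and> (\<forall>k\<in>Field r - underS r i. (i,k) \<in> r)"
  unfolding underS_def using wo_total by fastforce

lemma prefix_to_c:
  assumes wx: "wf_word x" and wy: "wf_word y" and p: "is_prefix x y"
  shows "pre_c x y"
proof -
  have r: "Well_order (fst x)" and s: "Well_order (fst y)" using wx wy by (auto simp: wf_word_def)
  obtain z P where P: "P \<subseteq> wdom y" and dc: "\<forall>i\<in>P. \<forall>j\<in>wdom y. (j, i) \<in> fst y \<longrightarrow> j \<in> P"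
    and e: "word_eq (subword y P) x"
    using p unfolding is_prefix_def is_concat_def by blast
  obtain g where g: "word_iso (subword y P) x g" using e unfolding word_eq_def by blast
  have g1: "bij_betw g P (Field (fst x))" and g2: "\<forall>i\<in>P. \<forall>j\<in>P. (i,j) \<in> fst y \<longleftrightarrow> (g i, g j) \<in> fst x"
    and g3: "\<forall>i\<in>P. snd x (g i) = snd y i" using g wiso_sub[OF s P] by (auto simp: wdom_def)
  have oe: "oemb (fst y) (fst x) P g" using g2 P unfolding oemb_def wdom_def by blast
  have im: "g ` P = Field (fst x)" using g1 by (simp add: bij_betw_def)
  have inj: "inj_on g P" using g1 by (simp add: bij_betw_def)
  define f where "f = inv_into P g"
  have o2: "oemb (fst x) (fst y) (Field (fst x)) f"
    using oemb_inv[OF s r oe] im f_def by simp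
  have fim: "f ` Field (fst x) = P" using im f_def inj by (metis inv_into_image_cancel order_refl)
  have "dcl (fst y) P" using P dc unfolding dcl_def wdom_def by (blast intro: FieldI1)
  moreover have "\<forall>k\<in>Field (fst x). snd y (f k) = snd x k"
  proof
    fix k assume k: "k \<in> Field (fst x)"
    then have "f k \<in> P" "g (f k) = k" using im f_def by (auto intro: inv_into_into f_inv_into_f)
    then show "snd y (f k) = snd x k" using g3 by metis
  qed
  ultimately show ?thesis unfolding pre_c_def using o2 fim by auto
qed

lemma strc_intro:
  fixes lx ly :: "nat \<Rightarrow> 'a::linorder"
  assumes r: "Well_order r" and s: "Well_order s"
    and P: "dcl r P" and i: "i \<in> Field r - P" "\<forall>k\<in>Field r - P. (i,k) \<in> r"
    and P': "dcl s P'" and i': "i' \<in> Field s - P'" "\<forall>k\<in>Field s - P'. (i',k) \<in> s"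
    and h: "oemb r s P h" "h ` P = P'" "\<forall>k\<in>P. ly (h k) = lx k"
    and lt: "lx i < ly i'"
  shows "str_c (r, lx) (s, ly)"
proof -
  have key: "\<And>r P i k. Well_order r \<Longrightarrow> dcl r P \<Longrightarrow> i \<in> Field r - P \<Longrightarrow> k \<in> P \<Longrightarrow> (k,i) \<in> r \<and> (i,k) \<notin> r"
  proof -
    fix r P i k assume r: "Well_order r" and P: "dcl r P" and i: "i \<in> Field r - P" and k: "k \<in> P"
    have "(i,k) \<notin> r" using P i k unfolding dcl_def by blast
    moreover have "k \<in> Field r" using P k unfolding dcl_def by blast
    ultimately show "(k,i) \<in> r \<and> (i,k) \<notin> r" using wo_total[OF r, of k i] i by blast
  qed
  have und: "\<And>r P i. Well_order r \<Longrightarrow> dcl r P \<Longrightarrow> i \<in> Field r - P \<Longrightarrow> \<forall>k\<in>Field r - P. (i,k) \<in> r \<Longrightarrow>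
      under r i = insert i P \<and> underS r i = P"
  proof -
    fix r P i assume r: "Well_order r" and P: "dcl r P" and i: "i \<in> Field r - P" and m: "\<forall>k\<in>Field r - P. (i,k) \<in> r"
    have "\<And>k. (k,i) \<in> r \<Longrightarrow> k \<noteq> i \<Longrightarrow> k \<in> P"
      using m wo_antisym[OF r] by (blast intro: FieldI1)
    then show "under r i = insert i P \<and> underS r i = P"
      using key[OF r P i(1)] wo_refl[OF r] i unfolding under_def underS_def by blast
  qed
  have u1: "under r i = insert i P" and u2: "underS r i = P" using und[OF r P i(1) i(2)] by auto
  have v1: "under s i' = insert i' P'" and v2: "underS s i' = P'" using und[OF s P' i'(1) i'(2)] by auto
  define f where "f = h(i := i')"
  have fP: "\<forall>k\<in>P. f k = h k" using i f_def by auto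
  have fi: "f i = i'" using f_def by simp
  have "oemb r s (insert i P) f"
    unfolding oemb_def
  proof (intro conjI ballI)
    show "insert i P \<subseteq> Field r" using P i unfolding dcl_def by blast
  next
    fix a b assume a: "a \<in> insert i P" and b: "b \<in> insert i P"
    have hP: "\<forall>k\<in>P. h k \<in> P'" using h by blast
    show "(a, b) \<in> r \<longleftrightarrow> (f a, f b) \<in> s"
    proof (cases "a = i")
      case True
      show ?thesis
      proof (cases "b = i")
        case True
        then show ?thesis using \<open>a = i\<close> fi wo_refl[OF r] wo_refl[OF s] i i' by auto
      next
        case False
        then have "b \<in> P" using b by auto
        then show ?thesis using \<open>a = i\<close> fi fP key[OF r P i(1)] key[OF s P' i'(1)] hP by auto
      qed
    next
      case False
      then have aP: "a \<in> P" using a by auto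
      show ?thesis
      proof (cases "b = i")
        case True
        then show ?thesis using aP fi fP key[OF r P i(1)] key[OF s P' i'(1)] hP by auto
      next
        case False
        then have "b \<in> P" using b by auto
        then show ?thesis using aP fP h(1) unfolding oemb_def by auto
      qed
    qed
  qed
  moreover have "f ` insert i P = insert i' P'" using fi fP h(2) by auto
  moreover have "dcl s (insert i' P')" using dcl_under[OF s] v1 i' by (metis DiffD1)
  moreover have "\<forall>k\<in>P. ly (f k) = lx k" using fP h(3) by auto
  ultimately have "oemb r s (under r i) f" "dcl s (f ` under r i)" "\<forall>k\<in>underS r i. ly (f k) = lx k"
    using u1 u2 by auto
  then show ?thesis unfolding str_c_def fst_conv snd_conv
    using i lt fi by blast
qed

lemma letter_concat:
  assumes wt: "wf_word t" and c: "is_concat t (letter a) z"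
  shows "\<exists>q\<in>wdom t. snd t q = a \<and> (\<forall>k\<in>wdom t. (q,k) \<in> fst t)"
proof -
  have s: "Well_order (fst t)" using wt by (simp add: wf_word_def)
  obtain Q where Q: "Q \<subseteq> wdom t" and dc: "\<forall>i\<in>Q. \<forall>j\<in>wdom t. (j, i) \<in> fst t \<longrightarrow> j \<in> Q"
    and e: "word_eq (subword t Q) (letter a)" using c unfolding is_concat_def by blast
  obtain g where g: "word_iso (subword t Q) (letter a) g" using e unfolding word_eq_def by blast
  have wl: "wdom (letter a) = {0}" by (simp add: wdom_def letter_def Field_def)
  have g1: "bij_betw g Q {0}" and g3: "\<forall>i\<in>Q. snd (letter a) (g i) = snd t i"
    using g wiso_sub[OF s Q] wl by auto
  obtain q where q: "q \<in> Q" using g1 by (metis bij_betwE bij_betw_inv_into empty_iff insertI1)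
  have "snd t q = a" using g3 q by (simp add: letter_def)
  moreover have "\<forall>k\<in>wdom t. (q,k) \<in> fst t"
  proof
    fix k assume k: "k \<in> wdom t"
    show "(q,k) \<in> fst t"
    proof (cases "(q,k) \<in> fst t")
      case False
      then have "(k,q) \<in> fst t" using wo_total[OF s, of q k] k Q q unfolding wdom_def by blast
      then have "k \<in> Q" using dc q k by blast
      have "g k = 0" "g q = 0" using g1 \<open>k \<in> Q\<close> q by (auto dest: bij_betwE)
      then have "k = q" using g1 q \<open>k \<in> Q\<close> unfolding bij_betw_def by (metis inj_onD)
      then show ?thesis using False wo_refl[OF s] k unfolding wdom_def by blast
    qed
  qed
  ultimately show ?thesis using q Q by blast
qed

lemma first_concat:
  assumes wx: "wf_word x" and wt: "wf_word t" and c: "is_concat x y0 t"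
    and q: "q\<in>wdom t" "snd t q = a" "\<forall>k\<in>wdom t. (q,k) \<in> fst t"
  shows "\<exists>P i g. dcl (fst x) P \<and> i \<in> Field (fst x) - P \<and> (\<forall>k\<in>Field (fst x) - P. (i,k) \<in> fst x) \<and>
     snd x i = a \<and> word_iso (subword x P) y0 g"
proof -
  have r: "Well_order (fst x)" using wx by (simp add: wf_word_def)
  obtain P where P: "P \<subseteq> wdom x" and dc: "\<forall>i\<in>P. \<forall>j\<in>wdom x. (j, i) \<in> fst x \<longrightarrow> j \<in> P"
    and e1: "word_eq (subword x P) y0" and e2: "word_eq (subword x (wdom x - P)) t"
    using c unfolding is_concat_def by blast
  obtain g1 where g1: "word_iso (subword x P) y0 g1" using e1 unfolding word_eq_def by blast
  obtain g2 where g2: "word_iso (subword x (wdom x - P)) t g2" using e2 unfolding word_eq_def by blast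
  have P2: "wdom x - P \<subseteq> wdom x" by blast
  have b2: "bij_betw g2 (wdom x - P) (wdom t)" and o2: "\<forall>i\<in>wdom x - P. \<forall>j\<in>wdom x - P. (i,j) \<in> fst x \<longleftrightarrow> (g2 i, g2 j) \<in> fst t"
    and l2: "\<forall>i\<in>wdom x - P. snd t (g2 i) = snd x i" using g2 wiso_sub[OF r P2] by auto
  define i where "i = inv_into (wdom x - P) g2 q"
  have i1: "i \<in> wdom x - P" using b2 q(1) i_def by (metis bij_betw_def inv_into_into)
  have i2: "g2 i = q" using b2 q(1) i_def by (metis bij_betw_def f_inv_into_f)
  have "snd x i = a" using l2 i1 i2 q(2) by metis
  moreover have "\<forall>k\<in>Field (fst x) - P. (i,k) \<in> fst x"
  proof
    fix k assume k: "k \<in> Field (fst x) - P"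
    then have "g2 k \<in> wdom t" using b2 unfolding wdom_def bij_betw_def by blast
    then have "(g2 i, g2 k) \<in> fst t" using q(3) i2 by simp
    then show "(i,k) \<in> fst x" using o2 i1 k unfolding wdom_def by blast
  qed
  moreover have "dcl (fst x) P" using P dc unfolding dcl_def wdom_def by (blast intro: FieldI1)
  ultimately show ?thesis using i1 g1 unfolding wdom_def by blast
qed

lemma str_to_c:
  fixes x y :: "'a::linorder word"
  assumes wx: "wf_word x" and wy: "wf_word y" and st: "str_less x y"
  shows "str_c x y"
proof -
  have r: "Well_order (fst x)" and s: "Well_order (fst y)" using wx wy by (auto simp: wf_word_def)
  obtain y0 z z' t t' a b where ab: "a < b" and w: "wf_word y0" "wf_word z" "wf_word z'" "wf_word t" "wf_word t'"
    and c1: "is_concat x y0 t" and c2: "is_concat t (letter a) z"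
    and c3: "is_concat y y0 t'" and c4: "is_concat t' (letter b) z'"
    using st unfolding str_less_def by blast
  obtain q where q: "q\<in>wdom t" "snd t q = a" "\<forall>k\<in>wdom t. (q,k) \<in> fst t" using letter_concat[OF w(4) c2] by blast
  obtain q' where q': "q'\<in>wdom t'" "snd t' q' = b" "\<forall>k\<in>wdom t'. (q',k) \<in> fst t'" using letter_concat[OF w(5) c4] by blast
  obtain P i g1 where P: "dcl (fst x) P" and i: "i \<in> Field (fst x) - P" "\<forall>k\<in>Field (fst x) - P. (i,k) \<in> fst x"
    and ia: "snd x i = a" and g1: "word_iso (subword x P) y0 g1"
    using first_concat[OF wx w(4) c1 q] by blast
  obtain P' i' g1' where P': "dcl (fst y) P'" and i': "i' \<in> Field (fst y) - P'" "\<forall>k\<in>Field (fst y) - P'. (i',k) \<in> fst y"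
    and ib: "snd y i' = b" and g1': "word_iso (subword y P') y0 g1'"
    using first_concat[OF wy w(5) c3 q'] by blast
  have r0: "Well_order (fst y0)" using w(1) by (simp add: wf_word_def)
  have PF: "P \<subseteq> wdom x" using P unfolding dcl_def wdom_def by blast
  have PF': "P' \<subseteq> wdom y" using P' unfolding dcl_def wdom_def by blast
  have a1: "bij_betw g1 P (wdom y0)" "\<forall>i\<in>P. \<forall>j\<in>P. (i,j) \<in> fst x \<longleftrightarrow> (g1 i, g1 j) \<in> fst y0"
    "\<forall>i\<in>P. snd y0 (g1 i) = snd x i" using g1 wiso_sub[OF r PF] by auto
  have a2: "bij_betw g1' P' (wdom y0)" "\<forall>i\<in>P'. \<forall>j\<in>P'. (i,j) \<in> fst y \<longleftrightarrow> (g1' i, g1' j) \<in> fst y0"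
    "\<forall>i\<in>P'. snd y0 (g1' i) = snd y i" using g1' wiso_sub[OF s PF'] by auto
  have oe1: "oemb (fst x) (fst y0) P g1" using a1(2) PF unfolding oemb_def wdom_def by blast
  have oe2: "oemb (fst y) (fst y0) P' g1'" using a2(2) PF' unfolding oemb_def wdom_def by blast
  have oi: "oemb (fst y0) (fst y) (g1' ` P') (inv_into P' g1')" using oemb_inv[OF s r0 oe2] .
  have im1: "g1 ` P = wdom y0" and im2: "g1' ` P' = wdom y0" using a1(1) a2(1) by (auto simp: bij_betw_def)
  define h where "h = inv_into P' g1' \<circ> g1"
  have ho: "oemb (fst x) (fst y) P h" unfolding h_def using oemb_comp[OF oe1 _ oi] im1 im2 by simp
  have inj2: "inj_on g1' P'" using a2(1) by (simp add: bij_betw_def)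
  have hi: "h ` P = P'" unfolding h_def using im1 im2 inj2
    by (metis image_comp inv_into_image_cancel order_refl)
  have hl: "\<forall>k\<in>P. snd y (h k) = snd x k"
  proof
    fix k assume k: "k \<in> P"
    then have gk: "g1 k \<in> g1' ` P'" using im1 im2 by blast
    then have "h k \<in> P'" "g1' (h k) = g1 k" unfolding h_def by (auto intro: inv_into_into f_inv_into_f)
    then show "snd y (h k) = snd x k" using a2(3) a1(3) k by metis
  qed
  have "str_c (fst x, snd x) (fst y, snd y)"
    using strc_intro[OF r s P i P' i' ho hi hl] ia ib ab by simp
  then show ?thesis by simp
qed



lemma Restr_Restr: "Restr (Restr r A) B = Restr r (A \<inter> B)"
  by auto

lemma concat_split:
  assumes w: "wf_word w" and P: "dcl (fst w) P"
  shows "is_concat w (subword w P) (subword w (wdom w - P))"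
  unfolding is_concat_def using P word_eq_refl unfolding dcl_def wdom_def by blast

lemma concat_letter_build:
  assumes w: "wf_word w" and P: "dcl (fst w) P" and i: "i \<in> Field (fst w) - P"
    and m: "\<forall>k\<in>Field (fst w) - P. (i,k) \<in> fst w"
  shows "is_concat (subword w (wdom w - P)) (letter (snd w i)) (subword w (wdom w - P - {i}))"
proof -
  have r: "Well_order (fst w)" using w by (simp add: wf_word_def)
  define t where "t = subword w (wdom w - P)"
  have wt: "wf_word t" using wf_word_subword[OF w] t_def by simp
  have rt: "Well_order (fst t)" using wt by (simp add: wf_word_def)
  have dt: "wdom t = wdom w - P" using wdom_subword[OF r, of "wdom w - P"] t_def by auto
  have ii: "(i,i) \<in> fst w" using wo_refl[OF r] i by blast
  have it: "{i} \<subseteq> wdom t" using dt i by (auto simp: wdom_def)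
  have dc: "\<forall>a\<in>{i}. \<forall>j\<in>wdom t. (j, a) \<in> fst t \<longrightarrow> j \<in> {i}"
  proof (intro ballI impI)
    fix a j assume a: "a \<in> {i}" and j: "j \<in> wdom t" and ja: "(j,a) \<in> fst t"
    then have "(j,i) \<in> fst w" by (simp add: t_def subword_def)
    moreover have "(i,j) \<in> fst w" using m j dt by (auto simp: wdom_def)
    ultimately show "j \<in> {i}" using wo_antisym[OF r] by blast
  qed
  have e1: "word_eq (subword t {i}) (letter (snd w i))"
    unfolding word_eq_def
  proof (rule exI[of _ "\<lambda>_. 0"])
    have d1: "wdom (subword t {i}) = {i}" using wdom_subword[OF rt it] .
    have d2: "wdom (letter (snd w i)) = {0::nat}" by (simp add: wdom_def letter_def Field_def)
    have "(i,i) \<in> fst (subword t {i})" using ii i by (simp add: t_def subword_def wdom_def)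
    then show "word_iso (subword t {i}) (letter (snd w i)) (\<lambda>_. 0)"
      unfolding word_iso_def d1 d2 by (auto simp: letter_def subword_def t_def bij_betw_def)
  qed
  have e2: "subword t (wdom t - {i}) = subword w (wdom w - P - {i})"
    by (simp only: dt) (auto simp: t_def subword_def)
  show ?thesis unfolding is_concat_def t_def[symmetric]
    using it dc e1 e2 word_eq_refl by metis
qed

lemma c_to_str:
  fixes x y :: "'a::linorder word"
  assumes wx: "wf_word x" and wy: "wf_word y" and st: "str_c x y"
  shows "str_less x y"
proof -
  have r: "Well_order (fst x)" and s: "Well_order (fst y)" using wx wy by (auto simp: wf_word_def)
  obtain i f where i: "i \<in> Field (fst x)" and f1: "oemb (fst x) (fst y) (under (fst x) i) f"
      and f2: "dcl (fst y) (f ` under (fst x) i)" and f3: "\<forall>k\<in>underS (fst x) i. snd y (f k) = snd x k"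
      and f4: "snd x i < snd y (f i)" using st unfolding str_c_def by blast
  define P where "P = underS (fst x) i"
  define P' where "P' = underS (fst y) (f i)"
  have iu: "i \<in> under (fst x) i" using i_in_under[OF r i] .
  have du: "dcl (fst x) (under (fst x) i)" using dcl_under[OF r i] .
  have fP: "f ` P = P'" unfolding P_def P'_def using underS_image[OF r f1 f2 du iu] .
  have fi: "f i \<in> Field (fst y)" using oemb_Field[OF r f1 iu] .
  have dP: "dcl (fst x) P" using underS_dcl[OF r] P_def by simp
  have dP': "dcl (fst y) P'" using underS_dcl[OF s] P'_def by simp
  have mi: "i \<in> Field (fst x) - P" "\<forall>k\<in>Field (fst x) - P. (i,k) \<in> fst x"
    using underS_min[OF r i] P_def by auto
  have mi': "f i \<in> Field (fst y) - P'" "\<forall>k\<in>Field (fst y) - P'. (f i,k) \<in> fst y"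
    using underS_min[OF s fi] P'_def by auto
  have c1: "is_concat x (subword x P) (subword x (wdom x - P))" using concat_split[OF wx dP] .
  have c2: "is_concat (subword x (wdom x - P)) (letter (snd x i)) (subword x (wdom x - P - {i}))"
    using concat_letter_build[OF wx dP mi] .
  have c4: "is_concat (subword y (wdom y - P')) (letter (snd y (f i))) (subword y (wdom y - P' - {f i}))"
    using concat_letter_build[OF wy dP' mi'] .
  have PU: "P \<subseteq> under (fst x) i" unfolding P_def underS_def under_def by blast
  have oP: "oemb (fst x) (fst y) P f" using oemb_sub[OF PU f1] .
  have oi: "oemb (fst y) (fst x) P' (inv_into P f)" using oemb_inv[OF r s oP] fP by simp
  have injP: "inj_on f P" using oemb_inj[OF r oP] .
  have PF: "P \<subseteq> wdom x" using dP unfolding dcl_def wdom_def by blast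
  have PF': "P' \<subseteq> wdom y" using dP' unfolding dcl_def wdom_def by blast
  have e3: "word_eq (subword y P') (subword x P)"
    unfolding word_eq_def
  proof (rule exI[of _ "inv_into P f"])
    have "bij_betw (inv_into P f) P' P" using fP injP by (metis bij_betw_inv_into inj_on_imp_bij_betw)
    moreover have "\<forall>a\<in>P'. \<forall>b\<in>P'. (a,b) \<in> fst y \<longleftrightarrow> (inv_into P f a, inv_into P f b) \<in> fst (subword x P)"
    proof (intro ballI)
      fix a b assume a: "a \<in> P'" and b: "b \<in> P'"
      then have "inv_into P f a \<in> P" "inv_into P f b \<in> P" using fP by (auto intro: inv_into_into)
      then show "(a,b) \<in> fst y \<longleftrightarrow> (inv_into P f a, inv_into P f b) \<in> fst (subword x P)"
        using oi a b unfolding oemb_def by (auto simp: subword_def)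
    qed
    moreover have "\<forall>a\<in>P'. snd (subword x P) (inv_into P f a) = snd y a"
    proof
      fix a assume a: "a \<in> P'"
      then have "inv_into P f a \<in> P" "f (inv_into P f a) = a" using fP by (auto intro: inv_into_into f_inv_into_f)
      then show "snd (subword x P) (inv_into P f a) = snd y a"
        using f3 P_def by (auto simp: subword_def)
    qed
    ultimately show "word_iso (subword y P') (subword x P) (inv_into P f)"
      using wiso_sub[OF s PF'] wdom_subword[OF r PF] by simp
  qed
  have c3: "is_concat y (subword x P) (subword y (wdom y - P'))"
    unfolding is_concat_def
  proof (rule exI[of _ P'], intro conjI)
    show "P' \<subseteq> wdom y" using PF' .
    show "\<forall>i\<in>P'. \<forall>j\<in>wdom y. (j, i) \<in> fst y \<longrightarrow> j \<in> P'" using dP' unfolding dcl_def by blast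
  qed (rule e3, rule word_eq_refl)
  have ws: "\<And>Q. wf_word (subword x Q)" "\<And>Q. wf_word (subword y Q)" using wf_word_subword[OF wx] wf_word_subword[OF wy] by blast+
  show ?thesis unfolding str_less_def
    apply (rule exI[of _ "subword x P"], rule exI[of _ "subword x (wdom x - P - {i})"],
      rule exI[of _ "subword y (wdom y - P' - {f i})"], rule exI[of _ "subword x (wdom x - P)"],
      rule exI[of _ "subword y (wdom y - P')"], rule exI[of _ "snd x i"], rule exI[of _ "snd y (f i)"])
    using f4 c1 c2 c3 c4 ws by simp
qed

lemma final_x:
  fixes u q :: "'a::linorder word"
  assumes wu: "wf_word u" and wq: "wf_word q" and st: "str_c u q"
  shows "\<exists>x y. wf_word x \<and> wf_word y \<and> is_concat q x y \<and> (fst x, fst u) \<in> ordLeq \<and> str_less u x"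
proof -
  have r: "Well_order (fst u)" and s: "Well_order (fst q)" using wu wq by (auto simp: wf_word_def)
  obtain i f where i: "i \<in> Field (fst u)" and f1: "oemb (fst u) (fst q) (under (fst u) i) f"
      and f2: "dcl (fst q) (f ` under (fst u) i)" and f3: "\<forall>k\<in>underS (fst u) i. snd q (f k) = snd u k"
      and f4: "snd u i < snd q (f i)" using st unfolding str_c_def by blast
  define X where "X = f ` under (fst u) i"
  define x where "x = subword q X"
  define y where "y = subword q (wdom q - X)"
  have wx: "wf_word x" and wy: "wf_word y" using wf_word_subword[OF wq] x_def y_def by auto
  have c: "is_concat q x y" using concat_split[OF wq] f2 x_def y_def X_def by simp
  have XF: "X \<subseteq> Field (fst q)" using f2 X_def unfolding dcl_def by blast
  have fx: "fst x = Restr (fst q) X" by (simp add: x_def subword_def)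
  have Fx: "Field (fst x) = X" using Field_Restr_sub[OF s XF] fx by simp
  have rx: "Well_order (fst x)" using wx by (simp add: wf_word_def)
  have iu: "i \<in> under (fst u) i" using i_in_under[OF r i] .
  have du: "dcl (fst u) (under (fst u) i)" using dcl_under[OF r i] .
  have ox: "oemb (fst u) (fst x) (under (fst u) i) f"
    using f1 unfolding oemb_def fx X_def by auto
  have dx: "dcl (fst x) X" unfolding dcl_def Fx using fx by auto
  have "str_c u x" unfolding str_c_def using i ox dx f3 f4 X_def by (auto simp: x_def subword_def)
  then have sl: "str_less u x" using c_to_str[OF wu wx] by simp
  have oi: "oemb (fst q) (fst u) X (inv_into (under (fst u) i) f)"
    using oemb_inv[OF r s f1] X_def by simp
  have inj: "inj_on f (under (fst u) i)" using oemb_inj[OF r f1] .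
  have "embed (fst x) (fst u) (inv_into (under (fst u) i) f)"
  proof -
    have "compat (fst x) (fst u) (inv_into (under (fst u) i) f)"
      unfolding compat_def fx using oi unfolding oemb_def by auto
    moreover have "inj_on (inv_into (under (fst u) i) f) (Field (fst x))"
      using Fx X_def by (simp add: inj_on_inv_into)
    moreover have "inv_into (under (fst u) i) f ` Field (fst x) = under (fst u) i"
      using Fx X_def inj by (simp add: inv_into_image_cancel)
    moreover have "Order_Relation.ofilter (fst u) (under (fst u) i)"
      using du unfolding dcl_def Order_Relation.ofilter_def under_def by blast
    ultimately show ?thesis using embed_iff_compat_inj_on_ofilter[OF rx r] by simp
  qed
  then have "(fst x, fst u) \<in> ordLeq" unfolding ordLeq_def using rx r by blast
  then show ?thesis using wx wy c sl by blast
qed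



definition blk_ok :: "nat rel \<Rightarrow> (nat \<Rightarrow> 'a) \<Rightarrow> nat rel \<Rightarrow> (nat \<Rightarrow> 'a) \<Rightarrow> nat set \<Rightarrow> (nat \<Rightarrow> nat) \<Rightarrow> bool" where
  "blk_ok R l U m Bk off \<longleftrightarrow> bij_betw off Bk (Field U) \<and>
     (\<forall>i\<in>Bk. \<forall>j\<in>Bk. (i,j) \<in> R \<longleftrightarrow> (off i, off j) \<in> U) \<and> (\<forall>i\<in>Bk. m (off i) = l i)"

definition pstruct :: "nat rel \<Rightarrow> (nat \<Rightarrow> 'a) \<Rightarrow> nat rel \<Rightarrow> (nat \<Rightarrow> 'a) \<Rightarrow> nat set \<Rightarrow> (nat \<Rightarrow> nat) \<Rightarrow> (nat \<Rightarrow> nat) \<Rightarrow> bool" where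
  "pstruct R l U m P bs off \<longleftrightarrow> dcl R P \<and>
     (\<forall>i\<in>P. bs i \<in> P \<and> (bs i, i) \<in> R \<and> bs (bs i) = bs i) \<and>
     (\<forall>i\<in>P. \<forall>j\<in>P. (i,j) \<in> R \<longrightarrow> (bs i, bs j) \<in> R) \<and>
     (\<forall>b\<in>bs ` P. blk_ok R l U m {i\<in>P. bs i = b} off)"

lemma blk_ok_cong: "(\<forall>i\<in>Bk. f i = g i) \<Longrightarrow> blk_ok R l U m Bk f \<Longrightarrow> blk_ok R l U m Bk g"
proof -
  assume eq: "\<forall>i\<in>Bk. f i = g i" and b: "blk_ok R l U m Bk f"
  have b1: "bij_betw f Bk (Field U)" and b2: "\<forall>i\<in>Bk. \<forall>j\<in>Bk. (i,j) \<in> R \<longleftrightarrow> (f i, f j) \<in> U"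
    and b3: "\<forall>i\<in>Bk. m (f i) = l i" using b unfolding blk_ok_def by auto
  have "bij_betw g Bk (Field U)" using b1 bij_betw_cong[of Bk f g] eq by blast
  moreover have "\<forall>i\<in>Bk. \<forall>j\<in>Bk. (i,j) \<in> R \<longleftrightarrow> (g i, g j) \<in> U" using b2 eq by simp
  moreover have "\<forall>i\<in>Bk. m (g i) = l i" using b3 eq by simp
  ultimately show ?thesis unfolding blk_ok_def by blast
qed

lemma blk_below:
  assumes U: "Well_order U" and b: "blk_ok R l U m Bk off" and i: "i \<in> Bk"
  shows "off ` {j\<in>Bk. (j,i) \<in> R \<and> j \<noteq> i} = {e\<in>Field U. (e, off i) \<in> U \<and> e \<noteq> off i}"
proof -
  have bij: "bij_betw off Bk (Field U)" and o: "\<forall>i\<in>Bk. \<forall>j\<in>Bk. (i,j) \<in> R \<longleftrightarrow> (off i, off j) \<in> U"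
    using b unfolding blk_ok_def by auto
  have inj: "inj_on off Bk" using bij by (simp add: bij_betw_def)
  show ?thesis
  proof
    show "off ` {j\<in>Bk. (j,i) \<in> R \<and> j \<noteq> i} \<subseteq> {e\<in>Field U. (e, off i) \<in> U \<and> e \<noteq> off i}"
    proof
      fix e assume "e \<in> off ` {j\<in>Bk. (j,i) \<in> R \<and> j \<noteq> i}"
      then obtain j where j: "j \<in> Bk" "(j,i) \<in> R" "j \<noteq> i" "e = off j" by blast
      have "off j \<in> Field U" using bij j(1) by (simp add: bij_betwE)
      moreover have "(off j, off i) \<in> U" using o j i by blast
      moreover have "off j \<noteq> off i" using inj j i by (meson inj_onD)
      ultimately show "e \<in> {e\<in>Field U. (e, off i) \<in> U \<and> e \<noteq> off i}" using j by simp
    qed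
  next
    show "{e\<in>Field U. (e, off i) \<in> U \<and> e \<noteq> off i} \<subseteq> off ` {j\<in>Bk. (j,i) \<in> R \<and> j \<noteq> i}"
    proof
      fix e assume e: "e \<in> {e\<in>Field U. (e, off i) \<in> U \<and> e \<noteq> off i}"
      then obtain j where j: "j \<in> Bk" "e = off j" using bij unfolding bij_betw_def by blast
      then show "e \<in> off ` {j\<in>Bk. (j,i) \<in> R \<and> j \<noteq> i}" using o i e by auto
    qed
  qed
qed

lemma pstruct_parts:
  assumes "pstruct R l U m P bs off"
  shows "dcl R P" "\<And>i. i \<in> P \<Longrightarrow> bs i \<in> P" "\<And>i. i \<in> P \<Longrightarrow> (bs i, i) \<in> R"
    "\<And>i. i \<in> P \<Longrightarrow> bs (bs i) = bs i"
    "\<And>i j. i \<in> P \<Longrightarrow> j \<in> P \<Longrightarrow> (i,j) \<in> R \<Longrightarrow> (bs i, bs j) \<in> R"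
    "\<And>i. i \<in> P \<Longrightarrow> blk_ok R l U m {j\<in>P. bs j = bs i} off"
  using assms unfolding pstruct_def by auto

lemma dcl_mem: "dcl R P \<Longrightarrow> i \<in> P \<Longrightarrow> (j,i) \<in> R \<Longrightarrow> j \<in> P"
  unfolding dcl_def by blast

lemma dcl_sub: "dcl R P \<Longrightarrow> i \<in> P \<Longrightarrow> i \<in> Field R"
  unfolding dcl_def by blast

lemma not_below:
  assumes R: "Well_order R" and U: "Well_order U"
    and S1: "pstruct R l U m P1 bs1 off1" and S2: "pstruct R l U m P2 bs2 off2"
    and i: "i \<in> P1" "i \<in> P2"
    and IH: "\<And>j. (j,i) \<in> R \<Longrightarrow> j \<noteq> i \<Longrightarrow> j \<in> P1 \<Longrightarrow> j \<in> P2 \<Longrightarrow> bs1 j = bs2 j \<and> off1 j = off2 j"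
  shows "\<not> ((bs1 i, bs2 i) \<in> R \<and> bs1 i \<noteq> bs2 i)"
proof
  assume a: "(bs1 i, bs2 i) \<in> R \<and> bs1 i \<noteq> bs2 i"
  note p1 = pstruct_parts[OF S1] and p2 = pstruct_parts[OF S2]
  define b1 where "b1 = bs1 i"
  define b2 where "b2 = bs2 i"
  have b12: "(b1,b2) \<in> R" "b1 \<noteq> b2" using a b1_def b2_def by auto
  have b2i: "(b2, i) \<in> R" using p2(3)[OF i(2)] b2_def by simp
  have b1i: "(b1, i) \<in> R" using p1(3)[OF i(1)] b1_def by simp
  have b1P1: "b1 \<in> P1" using p1(2)[OF i(1)] b1_def by simp
  show False
  proof (cases "b2 = i")
    case False
    have b2P1: "b2 \<in> P1" using dcl_mem[OF p1(1) i(1) b2i] .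
    have b2P2: "b2 \<in> P2" using p2(2)[OF i(2)] b2_def by simp
    have "bs1 b2 = bs2 b2" using IH[OF b2i False b2P1 b2P2] by simp
    also have "\<dots> = b2" using p2(4)[OF i(2)] b2_def by simp
    finally have e: "bs1 b2 = b2" .
    have "(bs1 b2, bs1 i) \<in> R" using p1(5)[OF b2P1 i(1) b2i] .
    then have "(b2, b1) \<in> R" using e b1_def by simp
    then show False using b12 wo_antisym[OF R] by blast
  next
    case True
    have b1i': "b1 \<noteq> i" using b12 True by simp
    have b1P2: "b1 \<in> P2" using dcl_mem[OF p2(1) i(2) b1i] .
    have "bs2 b1 = bs1 b1" using IH[OF b1i b1i' b1P1 b1P2] by simp
    also have "\<dots> = b1" using p1(4)[OF i(1)] b1_def by simp
    finally have e2: "bs2 b1 = b1" .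
    define X where "X = {j\<in>P2. bs2 j = b1}"
    have bX: "blk_ok R l U m X off2" using p2(6)[OF b1P2] e2 X_def by simp
    have Xprop: "\<And>j. j \<in> X \<Longrightarrow> (j,i) \<in> R \<and> j \<noteq> i \<and> j \<in> P1 \<and> bs1 j = b1 \<and> off1 j = off2 j"
    proof -
      fix j assume j: "j \<in> X"
      then have jP2: "j \<in> P2" and jb: "bs2 j = b1" using X_def by auto
      have nij: "(i,j) \<notin> R"
      proof
        assume "(i,j) \<in> R"
        then have "(bs2 i, bs2 j) \<in> R" using p2(5)[OF i(2) jP2] by simp
        then have "(i, b1) \<in> R" using jb True b2_def by simp
        then show False using b1i b1i' wo_antisym[OF R] by blast
      qed
      have ji: "(j,i) \<in> R" using wo_total[OF R dcl_sub[OF p2(1) jP2] dcl_sub[OF p2(1) i(2)]] nij by blast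
      have jni: "j \<noteq> i" using nij wo_refl[OF R dcl_sub[OF p2(1) i(2)]] by blast
      have jP1: "j \<in> P1" using dcl_mem[OF p1(1) i(1) ji] .
      show "(j,i) \<in> R \<and> j \<noteq> i \<and> j \<in> P1 \<and> bs1 j = b1 \<and> off1 j = off2 j"
        using IH[OF ji jni jP1 jP2] jb ji jni jP1 by simp
    qed
    define Y where "Y = {j\<in>P1. bs1 j = b1}"
    have bY: "blk_ok R l U m Y off1" using p1(6)[OF i(1)] Y_def b1_def by simp
    have XY: "X \<subseteq> Y" using Xprop Y_def by blast
    have "off2 ` X = Field U" using bX unfolding blk_ok_def bij_betw_def by blast
    moreover have "off1 ` X = off2 ` X" using Xprop by (auto simp: image_def)
    ultimately have o1X: "off1 ` X = Field U" by simp
    have iY: "i \<in> Y" using i(1) Y_def b1_def by simp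
    have "off1 i \<in> Field U" using bY iY unfolding blk_ok_def bij_betw_def by blast
    then obtain j where j: "j \<in> X" "off1 j = off1 i" using o1X by (metis imageE)
    have "inj_on off1 Y" using bY unfolding blk_ok_def bij_betw_def by blast
    then have "j = i" using j XY iY by (meson inj_onD subsetD)
    then show False using Xprop[OF j(1)] by simp
  qed
qed

lemma coherence:
  assumes R: "Well_order R" and U: "Well_order U"
    and S1: "pstruct R l U m P1 bs1 off1" and S2: "pstruct R l U m P2 bs2 off2"
  shows "i \<in> P1 \<Longrightarrow> i \<in> P2 \<Longrightarrow> bs1 i = bs2 i \<and> off1 i = off2 i"
proof (induction i rule: wf_induct_rule[OF wo_wf[OF R]])
  case (1 i)
  have IH: "\<And>j. (j,i) \<in> R \<Longrightarrow> j \<noteq> i \<Longrightarrow> j \<in> P1 \<Longrightarrow> j \<in> P2 \<Longrightarrow> bs1 j = bs2 j \<and> off1 j = off2 j"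
    using 1 by blast
  have IH': "\<And>j. (j,i) \<in> R \<Longrightarrow> j \<noteq> i \<Longrightarrow> j \<in> P2 \<Longrightarrow> j \<in> P1 \<Longrightarrow> bs2 j = bs1 j \<and> off2 j = off1 j"
  proof -
    fix j assume a: "(j,i) \<in> R" "j \<noteq> i" "j \<in> P2" "j \<in> P1"
    show "bs2 j = bs1 j \<and> off2 j = off1 j" using IH[OF a(1) a(2) a(4) a(3)] by simp
  qed
  note p1 = pstruct_parts[OF S1] and p2 = pstruct_parts[OF S2]
  have n1: "\<not> ((bs1 i, bs2 i) \<in> R \<and> bs1 i \<noteq> bs2 i)" using not_below[OF R U S1 S2 1(2,3) IH] .
  have n2: "\<not> ((bs2 i, bs1 i) \<in> R \<and> bs2 i \<noteq> bs1 i)" using not_below[OF R U S2 S1 1(3,2) IH'] .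
  have F1: "bs1 i \<in> Field R" using dcl_sub[OF p1(1) p1(2)[OF 1(2)]] .
  have F2: "bs2 i \<in> Field R" using dcl_sub[OF p2(1) p2(2)[OF 1(3)]] .
  have beq: "bs1 i = bs2 i" using wo_total[OF R F1 F2] n1 n2 by auto
  define b where "b = bs1 i"
  define Y1 where "Y1 = {j\<in>P1. bs1 j = b}"
  define Y2 where "Y2 = {j\<in>P2. bs2 j = b}"
  have bY1: "blk_ok R l U m Y1 off1" using p1(6)[OF 1(2)] Y1_def b_def by simp
  have bY2: "blk_ok R l U m Y2 off2" using p2(6)[OF 1(3)] Y2_def b_def beq by simp
  have iY1: "i \<in> Y1" using 1(2) Y1_def b_def by simp
  have iY2: "i \<in> Y2" using 1(3) Y2_def b_def beq by simp
  have Zeq: "{j\<in>Y1. (j,i) \<in> R \<and> j \<noteq> i} = {j\<in>Y2. (j,i) \<in> R \<and> j \<noteq> i}"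
  proof -
    have "\<And>j. (j,i) \<in> R \<Longrightarrow> j \<noteq> i \<Longrightarrow> (j \<in> Y1) = (j \<in> Y2)"
    proof -
      fix j assume ji: "(j,i) \<in> R" "j \<noteq> i"
      have jP: "j \<in> P1" "j \<in> P2" using dcl_mem[OF p1(1) 1(2) ji(1)] dcl_mem[OF p2(1) 1(3) ji(1)] .
      then show "(j \<in> Y1) = (j \<in> Y2)" using IH[OF ji jP] Y1_def Y2_def by simp
    qed
    then show ?thesis by blast
  qed
  define Z where "Z = {j\<in>Y1. (j,i) \<in> R \<and> j \<noteq> i}"
  have offZ: "off1 ` Z = off2 ` Z"
  proof -
    have "\<And>j. j \<in> Z \<Longrightarrow> off1 j = off2 j"
    proof -
      fix j assume "j \<in> Z"
      then have ji: "(j,i) \<in> R" "j \<noteq> i" and jP: "j \<in> P1" using Z_def Y1_def by auto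
      have "j \<in> P2" using dcl_mem[OF p2(1) 1(3) ji(1)] .
      then show "off1 j = off2 j" using IH[OF ji jP] by simp
    qed
    then show ?thesis by (rule image_cong[OF refl])
  qed
  have s1: "off1 ` Z = {e\<in>Field U. (e, off1 i) \<in> U \<and> e \<noteq> off1 i}"
    using blk_below[OF U bY1 iY1] Z_def by simp
  have s2: "off2 ` Z = {e\<in>Field U. (e, off2 i) \<in> U \<and> e \<noteq> off2 i}"
    using blk_below[OF U bY2 iY2] Z_def Zeq by simp
  have e1: "off1 i \<in> Field U" using bY1 iY1 unfolding blk_ok_def bij_betw_def by blast
  have e2: "off2 i \<in> Field U" using bY2 iY2 unfolding blk_ok_def bij_betw_def by blast
  have "off1 i = off2 i"
  proof (rule ccontr)
    assume ne: "off1 i \<noteq> off2 i"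
    have S: "{e\<in>Field U. (e, off1 i) \<in> U \<and> e \<noteq> off1 i} = {e\<in>Field U. (e, off2 i) \<in> U \<and> e \<noteq> off2 i}"
      using s1 s2 offZ by simp
    show False
    proof (cases "(off1 i, off2 i) \<in> U")
      case True
      then have "off1 i \<in> {e\<in>Field U. (e, off2 i) \<in> U \<and> e \<noteq> off2 i}" using e1 ne by simp
      then have "off1 i \<in> {e\<in>Field U. (e, off1 i) \<in> U \<and> e \<noteq> off1 i}" by (subst S)
      then show False by simp
    next
      case False
      then have "(off2 i, off1 i) \<in> U" using wo_total[OF U e1 e2] by blast
      then have "off2 i \<in> {e\<in>Field U. (e, off1 i) \<in> U \<and> e \<noteq> off1 i}" using e2 ne by simp
      then have "off2 i \<in> {e\<in>Field U. (e, off2 i) \<in> U \<and> e \<noteq> off2 i}" by (subst S[symmetric])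
      then show False by simp
    qed
  qed
  then show ?case using beq by simp
qed



definition PU :: "nat rel \<Rightarrow> (nat \<Rightarrow> 'a) \<Rightarrow> nat rel \<Rightarrow> (nat \<Rightarrow> 'a) \<Rightarrow> nat set" where
  "PU R l U m = \<Union>{P. \<exists>bs off. pstruct R l U m P bs off}"

definition pick :: "nat rel \<Rightarrow> (nat \<Rightarrow> 'a) \<Rightarrow> nat rel \<Rightarrow> (nat \<Rightarrow> 'a) \<Rightarrow> nat \<Rightarrow> nat set \<times> (nat \<Rightarrow> nat) \<times> (nat \<Rightarrow> nat)" where
  "pick R l U m i = (SOME t. pstruct R l U m (fst t) (fst (snd t)) (snd (snd t)) \<and> i \<in> fst t)"

definition bsU :: "nat rel \<Rightarrow> (nat \<Rightarrow> 'a) \<Rightarrow> nat rel \<Rightarrow> (nat \<Rightarrow> 'a) \<Rightarrow> nat \<Rightarrow> nat" where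
  "bsU R l U m i = fst (snd (pick R l U m i)) i"

definition offU :: "nat rel \<Rightarrow> (nat \<Rightarrow> 'a) \<Rightarrow> nat rel \<Rightarrow> (nat \<Rightarrow> 'a) \<Rightarrow> nat \<Rightarrow> nat" where
  "offU R l U m i = snd (snd (pick R l U m i)) i"

lemma agree:
  assumes R: "Well_order R" and U: "Well_order U" and S: "pstruct R l U m P bs off" and i: "i \<in> P"
  shows "bsU R l U m i = bs i \<and> offU R l U m i = off i"
proof -
  define t where "t = pick R l U m i"
  have "pstruct R l U m (fst t) (fst (snd t)) (snd (snd t)) \<and> i \<in> fst t"
    unfolding t_def pick_def by (rule someI[of _ "(P,bs,off)"]) (use S i in simp)
  then have "fst (snd t) i = bs i \<and> snd (snd t) i = off i"
    using coherence[OF R U _ S] i by blast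
  then show ?thesis unfolding bsU_def offU_def t_def by simp
qed

lemma union_struct:
  assumes R: "Well_order R" and U: "Well_order U"
  shows "pstruct R l U m (PU R l U m) (bsU R l U m) (offU R l U m)"
proof -
  define P0 where "P0 = PU R l U m"
  define bs0 where "bs0 = bsU R l U m"
  define off0 where "off0 = offU R l U m"
  have memP: "\<And>i. i \<in> P0 \<Longrightarrow> \<exists>P bs off. pstruct R l U m P bs off \<and> i \<in> P"
    unfolding P0_def PU_def by blast
  have subP: "\<And>P bs off. pstruct R l U m P bs off \<Longrightarrow> P \<subseteq> P0"
    unfolding P0_def PU_def by blast
  have ag: "\<And>P bs off i. pstruct R l U m P bs off \<Longrightarrow> i \<in> P \<Longrightarrow> bs0 i = bs i \<and> off0 i = off i"
    unfolding bs0_def off0_def using agree[OF R U] by blast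
  have d: "dcl R P0"
    unfolding dcl_def
  proof (intro conjI ballI allI impI)
    show "P0 \<subseteq> Field R" using memP pstruct_parts(1) dcl_sub by blast
  next
    fix a b assume a: "a \<in> P0" and ba: "(b,a) \<in> R"
    obtain P bs off where S: "pstruct R l U m P bs off" "a \<in> P" using memP[OF a] by blast
    have "b \<in> P" using dcl_mem[OF pstruct_parts(1)[OF S(1)] S(2) ba] .
    then show "b \<in> P0" using subP[OF S(1)] by blast
  qed
  have s2: "\<forall>i\<in>P0. bs0 i \<in> P0 \<and> (bs0 i, i) \<in> R \<and> bs0 (bs0 i) = bs0 i"
  proof
    fix i assume i: "i \<in> P0"
    obtain P bs off where S: "pstruct R l U m P bs off" "i \<in> P" using memP[OF i] by blast
    note p = pstruct_parts[OF S(1)]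
    have "bs0 i = bs i" using ag[OF S] by simp
    moreover have "bs0 (bs i) = bs (bs i)" using ag[OF S(1) p(2)[OF S(2)]] by simp
    ultimately show "bs0 i \<in> P0 \<and> (bs0 i, i) \<in> R \<and> bs0 (bs0 i) = bs0 i"
      using p(2)[OF S(2)] p(3)[OF S(2)] p(4)[OF S(2)] subP[OF S(1)] by auto
  qed
  have s3: "\<forall>i\<in>P0. \<forall>j\<in>P0. (i,j) \<in> R \<longrightarrow> (bs0 i, bs0 j) \<in> R"
  proof (intro ballI impI)
    fix i j assume i: "i \<in> P0" and j: "j \<in> P0" and ij: "(i,j) \<in> R"
    obtain P bs off where S: "pstruct R l U m P bs off" "j \<in> P" using memP[OF j] by blast
    note p = pstruct_parts[OF S(1)]
    have iP: "i \<in> P" using dcl_mem[OF p(1) S(2) ij] .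
    show "(bs0 i, bs0 j) \<in> R" using ag[OF S(1) iP] ag[OF S] p(5)[OF iP S(2) ij] by simp
  qed
  have s4: "\<forall>b\<in>bs0 ` P0. blk_ok R l U m {i\<in>P0. bs0 i = b} off0"
  proof
    fix b assume "b \<in> bs0 ` P0"
    then obtain i where i: "i \<in> P0" "b = bs0 i" by blast
    obtain P bs off where S: "pstruct R l U m P bs off" "i \<in> P" using memP[OF i(1)] by blast
    note p = pstruct_parts[OF S(1)]
    have bb: "b = bs i" using ag[OF S] i by simp
    define Y where "Y = {j\<in>P. bs j = b}"
    have bY: "blk_ok R l U m Y off" using p(6)[OF S(2)] Y_def bb by simp
    have eqY: "{j\<in>P0. bs0 j = b} = Y"
    proof
      show "Y \<subseteq> {j\<in>P0. bs0 j = b}" using Y_def ag[OF S(1)] subP[OF S(1)] by auto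
    next
      show "{j\<in>P0. bs0 j = b} \<subseteq> Y"
      proof
        fix j assume j: "j \<in> {j\<in>P0. bs0 j = b}"
        then have jP0: "j \<in> P0" and jb: "bs0 j = b" by auto
        show "j \<in> Y"
        proof (cases "j \<in> P")
          case True
          then show ?thesis using ag[OF S(1) True] jb Y_def by simp
        next
          case False
          obtain P' bs' off' where S': "pstruct R l U m P' bs' off'" "j \<in> P'" using memP[OF jP0] by blast
          note p' = pstruct_parts[OF S'(1)]
          have jF: "j \<in> Field R" using dcl_sub[OF p'(1) S'(2)] .
          have PP': "P \<subseteq> P'"
          proof
            fix k assume k: "k \<in> P"
            have kF: "k \<in> Field R" using dcl_sub[OF p(1) k] .
            have "(j,k) \<notin> R" using False dcl_mem[OF p(1) k] by blast
            then have "(k,j) \<in> R" using wo_total[OF R kF jF] by blast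
            then show "k \<in> P'" using dcl_mem[OF p'(1) S'(2)] by blast
          qed
          have jb': "bs' j = b" using ag[OF S'] jb by simp
          define Y' where "Y' = {k\<in>P'. bs' k = b}"
          have bY': "blk_ok R l U m Y' off'" using p'(6)[OF S'(2)] Y'_def jb' by simp
          have YY': "Y \<subseteq> Y'"
          proof
            fix k assume "k \<in> Y"
            then have k: "k \<in> P" "bs k = b" using Y_def by auto
            have "k \<in> P'" using PP' k(1) by blast
            then show "k \<in> Y'" using ag[OF S(1) k(1)] ag[OF S'(1) \<open>k \<in> P'\<close>] k Y'_def by simp
          qed
          have offeq: "\<forall>k\<in>Y. off' k = off k"
          proof
            fix k assume "k \<in> Y"
            then have k: "k \<in> P" "k \<in> P'" using Y_def PP' by auto
            then show "off' k = off k" using ag[OF S(1) k(1)] ag[OF S'(1) k(2)] by simp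
          qed
          have "off ` Y = Field U" using bY unfolding blk_ok_def bij_betw_def by blast
          then have imY: "off' ` Y = Field U" using offeq by (metis image_cong)
          have jY': "j \<in> Y'" using S'(2) jb' Y'_def by simp
          have "off' j \<in> Field U" using bY' jY' unfolding blk_ok_def bij_betw_def by blast
          then obtain k where k: "k \<in> Y" "off' k = off' j" using imY by (metis imageE)
          have "inj_on off' Y'" using bY' unfolding blk_ok_def bij_betw_def by blast
          then have "k = j" using k YY' jY' by (meson inj_onD subsetD)
          then show ?thesis using k by simp
        qed
      qed
    qed
    have "\<forall>k\<in>Y. off k = off0 k" using ag[OF S(1)] Y_def by auto
    then have "blk_ok R l U m Y off0" using blk_ok_cong bY by blast
    then show "blk_ok R l U m {i\<in>P0. bs0 i = b} off0" using eqY by simp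
  qed
  show ?thesis unfolding pstruct_def P0_def[symmetric] bs0_def[symmetric] off0_def[symmetric]
    using d s2 s3 s4 by blast
qed

lemma PU_max: "pstruct R l U m P bs off \<Longrightarrow> P \<subseteq> PU R l U m"
  unfolding PU_def by blast



lemma extend:
  assumes R: "Well_order R" and U: "Well_order U" and S: "pstruct R l U m P bs off"
    and ne: "Field U \<noteq> {}" and pc: "pre_c (U, m) (Restr R (Field R - P), l)"
  shows "\<exists>P' bs' off'. pstruct R l U m P' bs' off' \<and> \<not> P' \<subseteq> P"
proof -
  note p = pstruct_parts[OF S]
  define W where "W = Field R - P"
  obtain g where g1: "oemb U (Restr R W) (Field U) g" and g2: "dcl (Restr R W) (g ` Field U)"
    and g3: "\<forall>k\<in>Field U. l (g k) = m k" using pc unfolding pre_c_def W_def by auto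
  define Q where "Q = g ` Field U"
  have QW: "Q \<subseteq> W" using g2 Q_def unfolding dcl_def Field_def by blast
  have Qne: "Q \<noteq> {}" using ne Q_def by simp
  then obtain q where q: "q \<in> Q" by blast
  have WF: "W \<subseteq> Field R" using W_def by blast
  obtain s where sW: "s \<in> W" and smin: "\<And>y. (y,s) \<in> R - Id \<Longrightarrow> y \<notin> W"
    using wfE_min[OF wo_wf[OF R], of q W] q QW by blast
  have sle: "\<forall>k\<in>W. (s,k) \<in> R"
  proof
    fix k assume k: "k \<in> W"
    show "(s,k) \<in> R"
    proof (cases "k = s")
      case True then show ?thesis using wo_refl[OF R] sW WF by blast
    next
      case False then show ?thesis using smin[of k] k wo_total[OF R, of s k] sW WF by blast
    qed
  qed
  have sQ: "s \<in> Q"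
  proof -
    have "(s,q) \<in> Restr R W" using sle q QW sW by blast
    then show ?thesis using g2 q Q_def unfolding dcl_def by blast
  qed
  have sP: "s \<notin> P" using sW W_def by blast
  have PQ: "P \<inter> Q = {}" using QW W_def by blast
  have keyPW: "\<And>a k. a \<in> P \<Longrightarrow> k \<in> W \<Longrightarrow> (a,k) \<in> R \<and> (k,a) \<notin> R"
  proof -
    fix a k assume a: "a \<in> P" and k: "k \<in> W"
    have "(k,a) \<notin> R" using dcl_mem[OF p(1) a] k W_def by blast
    moreover have "a \<in> Field R" using dcl_sub[OF p(1) a] .
    ultimately show "(a,k) \<in> R \<and> (k,a) \<notin> R" using wo_total[OF R, of a k] k WF by blast
  qed
  define P' where "P' = P \<union> Q"
  define bs' where "bs' = (\<lambda>i. if i \<in> P then bs i else s)"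
  define off' where "off' = (\<lambda>i. if i \<in> P then off i else inv_into (Field U) g i)"
  have d: "dcl R P'"
    unfolding dcl_def
  proof (intro conjI ballI allI impI)
    show "P' \<subseteq> Field R" using P'_def p(1) QW WF unfolding dcl_def by blast
  next
    fix a b assume a: "a \<in> P'" and ba: "(b,a) \<in> R"
    show "b \<in> P'"
    proof (cases "a \<in> P")
      case True then show ?thesis using dcl_mem[OF p(1) True ba] P'_def by blast
    next
      case False
      then have aQ: "a \<in> Q" using a P'_def by blast
      show ?thesis
      proof (cases "b \<in> P")
        case True then show ?thesis using P'_def by blast
      next
        case False
        then have "b \<in> W" using ba W_def by (blast intro: FieldI1)
        then have "(b,a) \<in> Restr R W" using ba aQ QW by blast
        then have "b \<in> Q" using g2 aQ Q_def unfolding dcl_def by blast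
        then show ?thesis using P'_def by blast
      qed
    qed
  qed
  have s2: "\<forall>i\<in>P'. bs' i \<in> P' \<and> (bs' i, i) \<in> R \<and> bs' (bs' i) = bs' i"
  proof
    fix i assume i: "i \<in> P'"
    show "bs' i \<in> P' \<and> (bs' i, i) \<in> R \<and> bs' (bs' i) = bs' i"
    proof (cases "i \<in> P")
      case True then show ?thesis using p(2)[OF True] p(3)[OF True] p(4)[OF True] bs'_def P'_def by auto
    next
      case False
      then have "i \<in> Q" using i P'_def by blast
      then show ?thesis using False sQ sP sle QW bs'_def P'_def by auto
    qed
  qed
  have s3: "\<forall>i\<in>P'. \<forall>j\<in>P'. (i,j) \<in> R \<longrightarrow> (bs' i, bs' j) \<in> R"
  proof (intro ballI impI)
    fix i j assume i: "i \<in> P'" and j: "j \<in> P'" and ij: "(i,j) \<in> R"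
    show "(bs' i, bs' j) \<in> R"
    proof (cases "j \<in> P")
      case True
      then have "i \<in> P" using dcl_mem[OF p(1) True ij] by simp
      then show ?thesis using p(5)[OF _ True ij] True bs'_def by simp
    next
      case False
      show ?thesis
      proof (cases "i \<in> P")
        case True
        then show ?thesis using keyPW[OF p(2)[OF True] sW] False bs'_def by simp
      next
        case False
        then show ?thesis using \<open>j \<notin> P\<close> bs'_def wo_refl[OF R] sW WF by auto
      qed
    qed
  qed
  have injg: "inj_on g (Field U)" using oemb_inj[OF U g1] .
  have bijg: "bij_betw g (Field U) Q" using injg Q_def by (simp add: bij_betw_def)
  have blkQ: "blk_ok R l U m Q (inv_into (Field U) g)"
    unfolding blk_ok_def
  proof (intro conjI)
    show "bij_betw (inv_into (Field U) g) Q (Field U)" using bij_betw_inv_into[OF bijg] .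
  next
    have oi: "oemb (Restr R W) U Q (inv_into (Field U) g)"
      using oemb_inv[OF U Well_order_Restr[OF R] g1] Q_def by simp
    show "\<forall>i\<in>Q. \<forall>j\<in>Q. (i,j) \<in> R \<longleftrightarrow> (inv_into (Field U) g i, inv_into (Field U) g j) \<in> U"
      using oi QW unfolding oemb_def by blast
  next
    show "\<forall>i\<in>Q. m (inv_into (Field U) g i) = l i"
    proof
      fix i assume i: "i \<in> Q"
      then have "inv_into (Field U) g i \<in> Field U" "g (inv_into (Field U) g i) = i"
        using Q_def by (auto intro: inv_into_into f_inv_into_f)
      then show "m (inv_into (Field U) g i) = l i" using g3 by metis
    qed
  qed
  have s4: "\<forall>b\<in>bs' ` P'. blk_ok R l U m {i\<in>P'. bs' i = b} off'"
  proof
    fix b assume "b \<in> bs' ` P'"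
    then obtain i where i: "i \<in> P'" "b = bs' i" by blast
    show "blk_ok R l U m {i\<in>P'. bs' i = b} off'"
    proof (cases "i \<in> P")
      case True
      then have bb: "b = bs i" "b \<in> P" using i bs'_def p(2) by auto
      have eq: "{i\<in>P'. bs' i = b} = {j\<in>P. bs j = b}"
        using bb sP P'_def bs'_def by auto
      have "blk_ok R l U m {j\<in>P. bs j = b} off" using p(6)[OF True] bb by simp
      moreover have "\<forall>k\<in>{j\<in>P. bs j = b}. off k = off' k" using off'_def by simp
      ultimately have "blk_ok R l U m {j\<in>P. bs j = b} off'" by (rule blk_ok_cong[rotated])
      then show ?thesis using eq by simp
    next
      case False
      then have bs: "b = s" using i bs'_def by simp
      have eq: "{i\<in>P'. bs' i = b} = Q"
      proof -
        have "\<And>j. j \<in> P \<Longrightarrow> bs' j \<noteq> s" using p(2) sP bs'_def by auto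
        moreover have "\<And>j. j \<in> Q \<Longrightarrow> bs' j = s" using PQ bs'_def by auto
        ultimately show ?thesis using bs P'_def by auto
      qed
      have "\<forall>k\<in>Q. inv_into (Field U) g k = off' k" using PQ off'_def by auto
      then have "blk_ok R l U m Q off'" using blkQ by (rule blk_ok_cong)
      then show ?thesis using eq by simp
    qed
  qed
  have "pstruct R l U m P' bs' off'" unfolding pstruct_def using d s2 s3 s4 by blast
  moreover have "\<not> P' \<subseteq> P" using sQ sP P'_def by blast
  ultimately show ?thesis by blast
qed

lemma pstruct_pow:
  assumes R: "Well_order R" and U: "Well_order U" and S: "pstruct R l U m P bs off"
  shows "is_pow (subword (R,l) P) (U,m) (Restr R (bs ` P))"
proof -
  note p = pstruct_parts[OF S]
  have PF: "P \<subseteq> Field R" using p(1) unfolding dcl_def by blast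
  have BP: "bs ` P \<subseteq> P" using p(2) by blast
  have wd: "wdom (subword (R,l) P) = P" using wdom_subword[of "(R,l)" P] R PF by (simp add: wdom_def)
  have FB: "Field (Restr R (bs ` P)) = bs ` P" using Field_Restr_sub[OF R] BP PF by blast
  have blk: "\<And>i. i \<in> P \<Longrightarrow> bij_betw off {j\<in>P. bs j = bs i} (Field U) \<and>
      (\<forall>a\<in>{j\<in>P. bs j = bs i}. \<forall>b\<in>{j\<in>P. bs j = bs i}. (a,b) \<in> R \<longleftrightarrow> (off a, off b) \<in> U) \<and>
      (\<forall>a\<in>{j\<in>P. bs j = bs i}. m (off a) = l a)"
    using p(6) unfolding blk_ok_def by blast
  define f where "f = (\<lambda>i. (bs i, off i))"
  have offF: "\<And>i. i \<in> P \<Longrightarrow> off i \<in> Field U"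
  proof -
    fix i assume i: "i \<in> P"
    have "i \<in> {j\<in>P. bs j = bs i}" using i by simp
    then show "off i \<in> Field U" using blk[OF i] by (meson bij_betwE)
  qed
  have bij: "bij_betw f P (bs ` P \<times> Field U)"
    unfolding bij_betw_def
  proof
    show "inj_on f P"
    proof (rule inj_onI)
      fix i j assume i: "i \<in> P" and j: "j \<in> P" and e: "f i = f j"
      then have b: "bs i = bs j" and o: "off i = off j" using f_def by auto
      have "inj_on off {k\<in>P. bs k = bs i}" using blk[OF i] by (simp add: bij_betw_def)
      then show "i = j" using i j b o by (auto dest: inj_onD)
    qed
  next
    show "f ` P = bs ` P \<times> Field U"
    proof
      show "f ` P \<subseteq> bs ` P \<times> Field U" using offF f_def by auto
    next
      show "bs ` P \<times> Field U \<subseteq> f ` P"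
      proof
        fix x assume "x \<in> bs ` P \<times> Field U"
        then obtain i e where x: "x = (bs i, e)" "i \<in> P" "e \<in> Field U" by blast
        then have "e \<in> off ` {j\<in>P. bs j = bs i}" using blk[OF x(2)] by (simp add: bij_betw_def)
        then obtain j where j: "j \<in> P" "bs j = bs i" "e = off j" by blast
        then have "x = f j" using x f_def by simp
        then show "x \<in> f ` P" using j(1) by blast
      qed
    qed
  qed
  have ord: "\<forall>i\<in>P. \<forall>j\<in>P. (i,j) \<in> Restr R P \<longleftrightarrow>
      ((fst (f i) \<noteq> fst (f j) \<and> (fst (f i), fst (f j)) \<in> Restr R (bs ` P)) \<or>
       (fst (f i) = fst (f j) \<and> (snd (f i), snd (f j)) \<in> U))"
  proof (intro ballI)
    fix i j assume i: "i \<in> P" and j: "j \<in> P"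
    show "(i,j) \<in> Restr R P \<longleftrightarrow>
      ((fst (f i) \<noteq> fst (f j) \<and> (fst (f i), fst (f j)) \<in> Restr R (bs ` P)) \<or>
       (fst (f i) = fst (f j) \<and> (snd (f i), snd (f j)) \<in> U))"
    proof (cases "bs i = bs j")
      case True
      have "j \<in> {k\<in>P. bs k = bs i}" using j True by simp
      then show ?thesis using blk[OF i] i j True f_def by auto
    next
      case False
      have "(i,j) \<in> R \<longleftrightarrow> (bs i, bs j) \<in> R"
      proof
        assume "(i,j) \<in> R" then show "(bs i, bs j) \<in> R" using p(5)[OF i j] by simp
      next
        assume bij: "(bs i, bs j) \<in> R"
        show "(i,j) \<in> R"
        proof (rule ccontr)
          assume "(i,j) \<notin> R"
          then have "(j,i) \<in> R" using wo_total[OF R] i j PF by blast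
          then have "(bs j, bs i) \<in> R" using p(5)[OF j i] by simp
          then show False using bij False wo_antisym[OF R] by blast
        qed
      qed
      then show ?thesis using False i j f_def p(2) by auto
    qed
  qed
  show ?thesis unfolding is_pow_def
    apply (rule exI[of _ f])
    using bij ord wd FB p(6) blk f_def by (auto simp: wdom_def subword_def)
qed



lemma wo_empty: "Well_order ({} :: nat rel)"
  by (simp add: well_order_on_def linear_order_on_def partial_order_on_def preorder_on_def
      refl_on_def trans_def antisym_def total_on_def)

theorem mainTheorem9:
  fixes u v :: "('a::{linorder, finite}) word"
  assumes "wf_word u" and "wf_word v"
    and "prime_word u" and "prime_word v"
    and "lex_less u v"
  shows "\<exists>\<alpha> x y p q. Well_order \<alpha> \<and> wf_word x \<and> wf_word y \<and> wf_word p \<and> wf_word q \<and>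
           is_pow p u \<alpha> \<and> is_concat v p q \<and> is_concat q x y \<and>
           (fst x, fst u) \<in> ordLeq \<and> str_less u x"
proof -
  note wu = assms(1) and wv = assms(2) and pu = assms(3) and pv = assms(4) and lt = assms(5)
  obtain U m where u: "u = (U, m)" by (cases u)
  obtain R l where v: "v = (R, l)" by (cases v)
  have U: "Well_order U" using wu u by (simp add: wf_word_def)
  have R: "Well_order R" using wv v by (simp add: wf_word_def)
  have UE: "Field U \<noteq> {}"
  proof
    assume e: "Field U = {}"
    have "is_pow u u {}" unfolding is_pow_def using e u by (simp add: wdom_def bij_betw_def)
    then have "\<exists>k. Field ({} :: nat rel) = {k}"
      using pu wu wo_empty unfolding prime_word_def primitive_def by blast
    then show False by simp
  qed
  define P0 where "P0 = PU R l U m"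
  define bs0 where "bs0 = bsU R l U m"
  define off0 where "off0 = offU R l U m"
  have S: "pstruct R l U m P0 bs0 off0" using union_struct[OF R U] P0_def bs0_def off0_def by simp
  note p = pstruct_parts[OF S]
  have P0F: "P0 \<subseteq> Field R" using p(1) unfolding dcl_def by blast
  define W where "W = Field R - P0"
  define w where "w = subword v W"
  have w': "w = (Restr R W, l)" using w_def v by (simp add: subword_def)
  have ww: "wf_word w" using wf_word_subword[OF wv] w_def by simp
  have H1: "\<not> pre_c u w"
  proof
    assume "pre_c u w"
    then have "pre_c (U,m) (Restr R (Field R - P0), l)" using u w' W_def by simp
    then obtain P' bs' off' where "pstruct R l U m P' bs' off'" "\<not> P' \<subseteq> P0"
      using extend[OF R U S UE] by blast
    then show False using PU_max P0_def by blast
  qed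
  have nuv: "\<not> word_eq u v" using lt unfolding lex_less_def by blast
  have Wne: "W \<noteq> {}"
  proof
    assume "W = {}"
    then have PF: "P0 = Field R" using W_def P0F by blast
    have "is_pow (subword (R,l) P0) (U,m) (Restr R (bs0 ` P0))" using pstruct_pow[OF R U S] .
    moreover have "subword (R,l) P0 = v" using PF v by (simp add: subword_def Restr_Field)
    ultimately have "is_pow v u (Restr R (bs0 ` P0))" using u by simp
    then have "word_eq u v" using pv wu Well_order_Restr[OF R] unfolding prime_word_def primitive_def by blast
    then show False using nuv by simp
  qed
  have luv: "lexle_c u v"
  proof -
    have "is_prefix u v \<or> str_less u v" using lt unfolding lex_less_def lex_le_def by blast
    then show ?thesis unfolding lexle_c_def using prefix_to_c[OF wu wv] str_to_c[OF wu wv] by blast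
  qed
  have luw: "lexle_c u w"
  proof (cases "P0 = {}")
    case True
    then have "w = v" using w' v W_def by (simp add: Restr_Field)
    then show ?thesis using luv by simp
  next
    case False
    then obtain j where j: "j \<in> P0" by blast
    obtain q where q: "q \<in> W" using Wne by blast
    obtain s where sW: "s \<in> W" and smin: "\<And>y. (y,s) \<in> R - Id \<Longrightarrow> y \<notin> W"
      using wfE_min[OF wo_wf[OF R], of q W] q by blast
    have WF: "W \<subseteq> Field R" using W_def by blast
    have sle: "\<forall>k\<in>W. (s,k) \<in> R"
    proof
      fix k assume k: "k \<in> W"
      show "(s,k) \<in> R"
      proof (cases "k = s")
        case True then show ?thesis using wo_refl[OF R] sW WF by blast
      next
        case False then show ?thesis using smin[of k] k wo_total[OF R, of s k] sW WF by blast
      qed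
    qed
    have js: "(j,s) \<in> R" "j \<noteq> s"
    proof -
      have "(s,j) \<notin> R" using dcl_mem[OF p(1) j] sW W_def by blast
      then show "(j,s) \<in> R" using wo_total[OF R, of j s] j P0F sW WF by blast
      show "j \<noteq> s" using j sW W_def by blast
    qed
    have seteq: "{i \<in> wdom v. (s, i) \<in> fst v} = W"
    proof
      show "{i \<in> wdom v. (s, i) \<in> fst v} \<subseteq> W"
      proof
        fix i assume i: "i \<in> {i \<in> wdom v. (s, i) \<in> fst v}"
        then have "(s,i) \<in> R" "i \<in> Field R" using v by (auto simp: wdom_def)
        moreover have "i \<notin> P0" using dcl_mem[OF p(1)] sW W_def \<open>(s,i) \<in> R\<close> by blast
        ultimately show "i \<in> W" using W_def by blast
      qed
    next
      show "W \<subseteq> {i \<in> wdom v. (s, i) \<in> fst v}" using sle v W_def by (auto simp: wdom_def)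
    qed
    have "proper_suffix w v"
      unfolding proper_suffix_def
    proof (rule bexI[of _ s], intro conjI)
      show "\<exists>j\<in>wdom v. j \<noteq> s \<and> (j, s) \<in> fst v" using js j P0F v by (auto simp: wdom_def)
      show "word_eq w (subword v {i \<in> wdom v. (s, i) \<in> fst v})" using seteq w_def word_eq_refl by simp
      show "s \<in> wdom v" using sW W_def v by (simp add: wdom_def)
    qed
    then have "lex_le v w" using pv ww unfolding prime_word_def by blast
    then have "lexle_c v w" unfolding lex_le_def lexle_c_def
      using prefix_to_c[OF wv ww] str_to_c[OF wv ww] by blast
    then show ?thesis using lexle_trans[of u v w] luv wu wv ww by (simp add: wf_word_def)
  qed
  have "str_c u w" using luw H1 unfolding lexle_c_def by blast
  then obtain x y where xy: "wf_word x" "wf_word y" "is_concat w x y" "(fst x, fst u) \<in> ordLeq" "str_less u x"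
    using final_x[OF wu ww] by blast
  have pw: "is_pow (subword v P0) u (Restr R (bs0 ` P0))" using pstruct_pow[OF R U S] u v by simp
  have cv: "is_concat v (subword v P0) w"
    using concat_split[OF wv, of P0] p(1) v w_def W_def by (simp add: wdom_def)
  show ?thesis
    apply (rule exI[of _ "Restr R (bs0 ` P0)"], rule exI[of _ x], rule exI[of _ y],
      rule exI[of _ "subword v P0"], rule exI[of _ w])
    using Well_order_Restr[OF R] xy ww wf_word_subword[OF wv] pw cv by blast
qed

end
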